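(* There exists an absolute constant $C>0$ such that if $n\ge1$, $0<q\le 1-\frac2n$ and $\pi\sim\mu_{n,q}$, then $$\mathbb{P}(\mathrm{LIS}(\pi)\ge L)\le\left(\frac{C(1-q)n^2}{L^2}\right)^L$$ for all integers $L\ge Cn\sqrt{1-q}$.
   Context: For $q>0$ and $n\ge1$, $\mu_{n,q}(\pi)=q^{\mathrm{inv}(\pi)}/Z_{n,q}$ on $S_n$, with $\mathrm{inv}(\pi)$ the number of pairs $i<j$ with $\pi(i)>\pi(j)$ and $Z_{n,q}$ a normalizing constant. $\mathrm{LIS}(\pi)$ is the length of a longest increasing subsequence of $\pi$. *)

theory Defs
  imports "HOL-Analysis.Analysis" "HOL-Combinatorics.Permutations"
begin

definition perms :: "nat \<Rightarrow> (nat \<Rightarrow> nat) set" where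
  "perms n = {p. p permutes {1..n}}"

definition inversions :: "nat \<Rightarrow> (nat \<Rightarrow> nat) \<Rightarrow> nat" where
  "inversions n p = card {(i, j). i \<in> {1..n} \<and> j \<in> {1..n} \<and> i < j \<and> p i > p j}"

definition LIS :: "nat \<Rightarrow> (nat \<Rightarrow> nat) \<Rightarrow> nat" where
  "LIS n p = Max (card ` {S. S \<subseteq> {1..n} \<and> (\<forall>i\<in>S. \<forall>j\<in>S. i < j \<longrightarrow> p i < p j)})"

definition mallows_Z :: "nat \<Rightarrow> real \<Rightarrow> real" where
  "mallows_Z n q = (\<Sum>p\<in>perms n. q ^ inversions n p)"

definition mallows_prob :: "nat \<Rightarrow> real \<Rightarrow> ((nat \<Rightarrow> nat) \<Rightarrow> bool) \<Rightarrow> real" where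
  "mallows_prob n q P = (\<Sum>p\<in>{p \<in> perms n. P p}. q ^ inversions n p) / mallows_Z n q"

end

theory Submission imports Defs begin

definition incr :: "(nat \<Rightarrow> nat) \<Rightarrow> nat set \<Rightarrow> bool" where
  "incr p S \<longleftrightarrow> (\<forall>i\<in>S. \<forall>j\<in>S. i < j \<longrightarrow> p i < p j)"

lemma inv_compose_le:
  assumes tau: "tau permutes B" and B: "B \<subseteq> {lo..hi}" "B \<subseteq> {1..n}"
  shows "inversions n (p \<circ> tau) \<le> inversions n p + 2 * card B * (hi + 1 - lo)"
proof -
  define I' where "I' = {(i, j). i \<in> {1..n} \<and> j \<in> {1..n} \<and> i < j \<and> (p \<circ> tau) i > (p \<circ> tau) j}"
  define I where "I = {(i, j). i \<in> {1..n} \<and> j \<in> {1..n} \<and> i < j \<and> p i > p j}"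
  define X where "X = {(i, j). i < j \<and> (i \<in> B \<or> j \<in> B) \<and> lo \<le> i \<and> j \<le> hi}"
  have tB: "\<And>x. tau x \<in> B \<longleftrightarrow> x \<in> B" using tau by (simp add: permutes_in_image)
  have tid: "\<And>x. x \<notin> B \<Longrightarrow> tau x = x" using tau by (simp add: permutes_not_in)
  have finB: "finite B" using B(2) finite_subset by blast
  have fin: "finite I" "finite I'" unfolding I_def I'_def
    by (rule finite_subset[of _ "{1..n} \<times> {1..n}"], auto)+
  have "X \<subseteq> B \<times> {lo..hi} \<union> {lo..hi} \<times> B" unfolding X_def using B by auto
  hence finX: "finite X" using finB by (meson finite_Un finite_SigmaI finite_atLeastAtMost finite_subset)
  from \<open>X \<subseteq> _\<close> have "card X \<le> card (B \<times> {lo..hi} \<union> {lo..hi} \<times> B)"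
    by (intro card_mono) (use finB in auto)
  also have "\<dots> \<le> card (B \<times> {lo..hi}) + card ({lo..hi} \<times> B)" by (rule card_Un_le)
  also have "\<dots> = 2 * card B * (hi + 1 - lo)" by (simp add: card_cartesian_product)
  finally have cX: "card X \<le> 2 * card B * (hi + 1 - lo)" .
  have map: "(\<lambda>(i,j). (tau i, tau j)) ` (I' - X) \<subseteq> I - X"
  proof
    fix z assume "z \<in> (\<lambda>(i,j). (tau i, tau j)) ` (I' - X)"
    then obtain i j where z: "z = (tau i, tau j)" and ij: "(i,j) \<in> I'" "(i,j) \<notin> X" by auto
    have r1: "i \<in> {1..n}" "j \<in> {1..n}" "i < j" "p (tau i) > p (tau j)" using ij(1) unfolding I'_def by auto
    have n1: "\<not> (i \<in> B \<and> j \<in> B)" using ij(2) r1(3) B(1) unfolding X_def by auto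
    have t1: "tau i \<in> {1..n}" "tau j \<in> {1..n}" using r1 tB tid B(2) by (metis subsetD)+
    have lt: "tau i < tau j" and nx: "(tau i, tau j) \<notin> X"
    proof -
      have "(tau i < tau j) \<and> (tau i, tau j) \<notin> X"
      proof (cases "i \<in> B")
        case True
        then have "j \<notin> B" using n1 by auto
        then have "j > hi" using ij(2) r1(3) True B(1) unfolding X_def by auto
        moreover have "tau i \<le> hi" using True tB B(1) by (metis atLeastAtMost_iff subsetD)
        ultimately show ?thesis using tid[OF \<open>j \<notin> B\<close>] unfolding X_def by auto
      next
        case False
        show ?thesis
        proof (cases "j \<in> B")
          case True
          then have "i < lo" using ij(2) r1(3) False B(1) unfolding X_def by auto
          moreover have "tau j \<ge> lo" using True tB B(1) by (metis atLeastAtMost_iff subsetD)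
          ultimately show ?thesis using tid[OF False] unfolding X_def by auto
        next
          case False2: False
          then show ?thesis using False tid tB r1(3) unfolding X_def by auto
        qed
      qed
      then show "tau i < tau j" "(tau i, tau j) \<notin> X" by auto
    qed
    show "z \<in> I - X" using z lt nx t1 r1(4) unfolding I_def by auto
  qed
  have inj: "inj_on (\<lambda>(i,j). (tau i, tau j)) (I' - X)"
    using permutes_inj[OF tau] by (auto simp: inj_on_def inj_def)
  have "card (I' - X) \<le> card (I - X)"
    using card_inj_on_le[OF inj map] fin by auto
  also have "\<dots> \<le> card I" using fin by (intro card_mono) auto
  finally have a: "card (I' - X) \<le> card I" .
  have "card I' \<le> card (I' - X) + card (I' \<inter> X)"
    using fin by (metis Int_commute card_Diff_subset_Int card_Un_le le_refl Un_Diff_Int)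
  also have "card (I' \<inter> X) \<le> card X"
    using finX by (simp add: card_mono)
  finally show ?thesis using a cX unfolding inversions_def I'_def[symmetric] I_def[symmetric] by linarith
qed

lemma incr_unique:
  fixes f g :: "nat \<Rightarrow> nat"
  assumes "incr f B" "incr g B" "f ` B = g ` B"
  shows "\<forall>i\<in>B. f i = g i"
proof -
  have "i \<in> B \<longrightarrow> f i = g i" for i
  proof (induction i rule: less_induct)
    case (less i)
    show ?case
    proof
      assume iB: "i \<in> B"
      show "f i = g i"
      proof (rule ccontr)
        assume ne: "f i \<noteq> g i"
        show False
        proof (cases "f i < g i")
          case True
          have "f i \<in> g ` B" using iB assms(3) by blast
          then obtain j where j: "j \<in> B" "f i = g j" by auto
          consider "j < i" | "j = i" | "j > i" by linarith
          then show False
          proof cases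
            case 1 then show ?thesis using less j iB assms(1) unfolding incr_def by (metis less_irrefl)
          next
            case 2 then show ?thesis using j ne by simp
          next
            case 3 then show ?thesis using j iB True assms(2) unfolding incr_def by (metis not_less_iff_gr_or_eq order.strict_trans)
          qed
        next
          case False
          then have lt: "g i < f i" using ne by linarith
          have "g i \<in> f ` B" using iB assms(3) by blast
          then obtain j where j: "j \<in> B" "g i = f j" by auto
          consider "j < i" | "j = i" | "j > i" by linarith
          then show False
          proof cases
            case 1 then show ?thesis using less j iB assms(2) unfolding incr_def by (metis less_irrefl)
          next
            case 2 then show ?thesis using j ne by simp
          next
            case 3 then show ?thesis using j iB lt assms(1) unfolding incr_def by (metis not_less_iff_gr_or_eq order.strict_trans)
          qed
        qed
      qed
    qed
  qed
  then show ?thesis by blast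
qed

lemma compose_inj:
  assumes p: "p permutes {1..n}" "p' permutes {1..n}" and ip: "incr p B" "incr p' B"
    and t: "t permutes B" "t' permutes B" and eq: "p \<circ> t = p' \<circ> t'"
  shows "p = p' \<and> t = t'"
proof -
  have "p ` B = (p \<circ> t) ` B" using t(1) by (metis image_comp permutes_image)
  also have "\<dots> = (p' \<circ> t') ` B" using eq by simp
  also have "\<dots> = p' ` B" using t(2) by (metis image_comp permutes_image)
  finally have "\<forall>i\<in>B. p i = p' i" using incr_unique ip by blast
  moreover have "x \<notin> B \<Longrightarrow> p x = p' x" for x
    using fun_cong[OF eq, of x] t by (simp add: permutes_not_in)
  ultimately have pp: "p = p'" by blast
  have "t = t'"
  proof
    fix x show "t x = t' x" using fun_cong[OF eq, of x] pp permutes_inj[OF p(1)] by (simp add: inj_eq)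
  qed
  with pp show ?thesis by simp
qed

definition W :: "nat \<Rightarrow> real \<Rightarrow> (nat \<Rightarrow> nat) set \<Rightarrow> real" where
  "W n q A = (\<Sum>p\<in>A. q ^ inversions n p)"

lemma block_step:
  assumes B: "B \<subseteq> {lo..hi}" "B \<subseteq> {1..n}"
    and A: "A \<subseteq> perms n" "\<And>p. p \<in> A \<Longrightarrow> incr p B"
    and A': "A' \<subseteq> perms n" "\<And>p t. p \<in> A \<Longrightarrow> t permutes B \<Longrightarrow> p \<circ> t \<in> A'"
    and q: "0 < q" "q \<le> 1"
  shows "W n q A * fact (card B) * q ^ (2 * card B * (hi + 1 - lo)) \<le> W n q A'"
proof -
  define T where "T = {t. t permutes B}"
  define K where "K = 2 * card B * (hi + 1 - lo)"
  have finB: "finite B" using B(2) finite_subset by blast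
  have cT: "card T = fact (card B)" unfolding T_def using card_permutations finB by blast
  have finT: "finite T" unfolding T_def using finB finite_permutations by blast
  have finP: "finite (perms n)" unfolding perms_def using finite_permutations by blast
  have finA: "finite A" "finite A'" using A(1) A'(1) finP finite_subset by blast+
  have "W n q A * fact (card B) * q ^ K = (\<Sum>p\<in>A. \<Sum>t\<in>T. q ^ inversions n p * q ^ K)"
    unfolding W_def by (simp add: cT sum_distrib_left sum_distrib_right mult_ac)
  also have "\<dots> \<le> (\<Sum>p\<in>A. \<Sum>t\<in>T. q ^ inversions n (p \<circ> t))"
  proof (intro sum_mono)
    fix p t assume "p \<in> A" "t \<in> T"
    have "inversions n (p \<circ> t) \<le> inversions n p + K"
      unfolding K_def using inv_compose_le[of t B lo hi n p] \<open>t \<in> T\<close> B unfolding T_def by auto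
    then have "q ^ (inversions n p + K) \<le> q ^ inversions n (p \<circ> t)"
      using q by (intro power_decreasing) auto
    then show "q ^ inversions n p * q ^ K \<le> q ^ inversions n (p \<circ> t)" by (simp add: power_add)
  qed
  also have "\<dots> = (\<Sum>z\<in>A \<times> T. q ^ inversions n (case z of (p, t) \<Rightarrow> p \<circ> t))"
    by (simp add: sum.cartesian_product split_def)
  also have "\<dots> = (\<Sum>r\<in>(\<lambda>(p,t). p \<circ> t) ` (A \<times> T). q ^ inversions n r)"
  proof (rule sum.reindex[symmetric, unfolded comp_def])
    show "inj_on (\<lambda>(p, t). p \<circ> t) (A \<times> T)"
    proof (rule inj_onI, clarify)
      fix p t p' t' assume "p \<in> A" "t \<in> T" "p' \<in> A" "t' \<in> T" "p \<circ> t = p' \<circ> t'"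
      then show "p = p' \<and> t = t'"
        using compose_inj[of p n p' B t t'] A unfolding T_def perms_def by blast
    qed
  qed
  also have "\<dots> \<le> W n q A'"
    unfolding W_def using A'(2) finA q by (intro sum_mono2) (auto simp: T_def)
  finally show ?thesis unfolding K_def .
qed

lemma exp_ge_term: assumes "0 \<le> (x::real)" shows "x^n / fact n \<le> exp x"
proof -
  have s: "(\<lambda>k. x^k / fact k) sums exp x" using exp_converges[of x] by (simp add: divide_inverse mult.commute)
  have "sum (\<lambda>k. x^k / fact k) {n} \<le> suminf (\<lambda>k. x^k / fact k)"
    by (rule sum_le_suminf) (use s assms in \<open>auto simp: sums_iff\<close>)
  then show ?thesis using s by (simp add: sums_iff)
qed

lemma fact_ge: "(real k / exp 1)^k \<le> fact k"
proof -
  have "real k ^ k / fact k \<le> exp (real k)" by (rule exp_ge_term) simp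
  also have "exp (real k) = exp 1 ^ k" by (simp add: exp_of_nat_mult[symmetric])
  finally show ?thesis by (simp add: power_divide field_simps)
qed

lemma fact_ge_m: "m \<le> k \<Longrightarrow> (real m / exp 1)^k \<le> fact k"
  by (rule order.trans[OF _ fact_ge]) (intro power_mono divide_right_mono; simp)

lemma W_nonneg: "0 < q \<Longrightarrow> 0 \<le> W n q A"
  unfolding W_def by (intro sum_nonneg) simp

lemma W_mono: "0 < q \<Longrightarrow> A \<subseteq> B \<Longrightarrow> B \<subseteq> perms n \<Longrightarrow> W n q A \<le> W n q B"
  unfolding W_def
  by (intro sum_mono2) (auto simp: perms_def intro: finite_subset[OF _ finite_permutations])

lemma chain:
  assumes "sorted_wrt (<) xs" "set xs \<subseteq> {a..n}" "1 \<le> a" "1 \<le> m" "m \<le> length xs" "0 < q" "q \<le> 1"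
  shows "W n q {p\<in>perms n. incr p (set xs)} * (real m / exp 1)^length xs * q^(4*m*(n+1-a))
           \<le> W n q (perms n)"
  using assms
proof (induction "length xs" arbitrary: xs a rule: less_induct)
  case less
  note sxs = less.prems(1) and sub = less.prems(2) and a1 = less.prems(3) and m1 = less.prems(4)
    and mL = less.prems(5) and q = less.prems(6,7)
  define r where "r = real m / exp 1"
  have r0: "0 \<le> r" unfolding r_def by simp
  have dist: "distinct xs" using sxs by (simp add: strict_sorted_iff)
  show ?case
  proof (cases "length xs < 2 * m")
    case True
    have f1: "W n q {p\<in>perms n. incr p (set xs)} * fact (card (set xs)) * q ^ (2 * card (set xs) * (n + 1 - a))
          \<le> W n q (perms n)"
    proof (rule block_step)
      have s1: "set xs \<subseteq> {1..n}" using sub a1 by auto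
      then show "set xs \<subseteq> {1..n}" .
      show "set xs \<subseteq> {a..n}" by (rule sub)
      show "{p \<in> perms n. incr p (set xs)} \<subseteq> perms n" "perms n \<subseteq> perms n" by auto
      show "\<And>p. p \<in> {p \<in> perms n. incr p (set xs)} \<Longrightarrow> incr p (set xs)" by auto
      show "0 < q" "q \<le> 1" by (rule q)+
      fix p t assume "p \<in> {p \<in> perms n. incr p (set xs)}" "t permutes set xs"
      then show "p \<circ> t \<in> perms n" using s1 unfolding perms_def
        by (auto intro: permutes_compose permutes_subset)
    qed
    have f2: "r ^ length xs \<le> fact (card (set xs))"
      using fact_ge_m[of m "length xs"] mL dist by (simp add: distinct_card r_def)
    have f3: "q^(4*m*(n+1-a)) \<le> q ^ (2 * card (set xs) * (n + 1 - a))"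
      using q True dist by (intro power_decreasing) (auto simp: distinct_card)
    let ?W = "W n q {p\<in>perms n. incr p (set xs)}"
    have "?W * r ^ length xs * q^(4*m*(n+1-a)) \<le> ?W * fact (card (set xs)) * q ^ (2 * card (set xs) * (n + 1 - a))"
      using W_nonneg[OF q(1)] q f2 f3 by (intro mult_mono mult_left_mono) auto
    then show ?thesis using f1 unfolding r_def by linarith
  next
    case False
    define ys where "ys = take m xs"
    define zs where "zs = drop m xs"
    have xs: "xs = ys @ zs" unfolding ys_def zs_def by simp
    have sy: "sorted_wrt (<) ys" and sz: "sorted_wrt (<) zs" and yz: "\<forall>y\<in>set ys. \<forall>z\<in>set zs. y < z"
      using sxs unfolding xs sorted_wrt_append by auto
    have ly: "length ys = m" unfolding ys_def using mL by simp
    have lz: "length zs = length xs - m" unfolding zs_def by simp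
    have cy: "card (set ys) = m" using ly dist xs by (simp add: distinct_card)
    have ne: "set ys \<noteq> {}" using ly m1 by auto
    define hi where "hi = Max (set ys)"
    have hiy: "hi \<in> set ys" unfolding hi_def using ne by simp
    have ysub: "set ys \<subseteq> {a..hi}" using sub xs hi_def by auto
    have zsub: "set zs \<subseteq> {hi+1..n}" using sub xs yz hiy by fastforce
    have hin: "hi \<le> n" "a \<le> hi" using hiy sub xs by auto
    have IH: "W n q {p\<in>perms n. incr p (set zs)} * r^length zs * q^(4*m*(n+1-(hi+1))) \<le> W n q (perms n)"
      unfolding r_def
      by (rule less.hyps) (use lz False m1 sz zsub hin in auto, use q in auto)
    define A where "A = {p\<in>perms n. incr p (set ys) \<and> incr p (set zs)}"
    have blk: "W n q A * fact (card (set ys)) * q ^ (2 * card (set ys) * (hi + 1 - a))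
              \<le> W n q {p\<in>perms n. incr p (set zs)}"
    proof (rule block_step)
      show "set ys \<subseteq> {a..hi}" by (rule ysub)
      show "set ys \<subseteq> {1..n}" using ysub a1 hin by auto
      show "A \<subseteq> perms n" unfolding A_def by auto
      show "\<And>p. p \<in> A \<Longrightarrow> incr p (set ys)" unfolding A_def by auto
      show "{p \<in> perms n. incr p (set zs)} \<subseteq> perms n" by auto
      show "0 < q" "q \<le> 1" by (rule q)+
      fix p t assume pA: "p \<in> A" and t: "t permutes set ys"
      have tz: "\<And>x. x \<in> set zs \<Longrightarrow> t x = x" using t yz by (meson less_irrefl permutes_not_in)
      have "t permutes {1..n}" using t ysub a1 hin by (rule_tac permutes_subset) auto
      then have "p \<circ> t \<in> perms n" using pA unfolding A_def perms_def by (auto intro: permutes_compose)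
      moreover have "incr (p \<circ> t) (set zs)" using pA tz unfolding A_def incr_def by auto
      ultimately show "p \<circ> t \<in> {p \<in> perms n. incr p (set zs)}" by simp
    qed
    have sx: "W n q {p\<in>perms n. incr p (set xs)} \<le> W n q A"
      using q by (intro W_mono) (auto simp: A_def xs incr_def)
    have rm: "r ^ m \<le> fact m" unfolding r_def using fact_ge_m[of m m] by simp
    have rL: "r ^ length xs = r ^ m * r ^ length zs" using lz mL by (simp add: power_add[symmetric])
    have qe: "q^(4*m*(n+1-a)) \<le> q ^ (2 * m * (hi + 1 - a)) * q^(4*m*(n+1-(hi+1)))"
    proof -
      have "q^(4*m*(n+1-a)) \<le> q ^ (2 * m * (hi + 1 - a) + 4*m*(n+1-(hi+1)))"
      proof (intro power_decreasing)
        have e: "n+1-a = (hi+1-a) + (n+1-(hi+1))" using hin by simp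
        have "2 * m * (hi + 1 - a) + 4*m*(n+1-(hi+1)) \<le> 4*m*((hi+1-a) + (n+1-(hi+1)))"
          by (simp add: algebra_simps)
        then show "2 * m * (hi + 1 - a) + 4*m*(n+1-(hi+1)) \<le> 4*m*(n+1-a)" using e by simp
      qed (use q in auto)
      then show ?thesis by (simp add: power_add)
    qed
    have W0: "0 \<le> W n q {p\<in>perms n. incr p (set xs)}" "0 \<le> W n q A" using q W_nonneg by auto
    have "W n q {p\<in>perms n. incr p (set xs)} * r^length xs * q^(4*m*(n+1-a))
        \<le> W n q A * (fact m * r ^ length zs) * (q ^ (2 * m * (hi + 1 - a)) * q^(4*m*(n+1-(hi+1))))"
      unfolding rL using sx rm qe W0 r0 q
      by (intro mult_mono) (auto intro!: mult_right_mono)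
    also have "\<dots> = (W n q A * fact (card (set ys)) * q ^ (2 * card (set ys) * (hi + 1 - a))) * r ^ length zs * q^(4*m*(n+1-(hi+1)))"
      by (simp add: cy mult_ac)
    also have "\<dots> \<le> W n q {p\<in>perms n. incr p (set zs)} * r ^ length zs * q^(4*m*(n+1-(hi+1)))"
      using blk r0 q by (intro mult_right_mono) auto
    also have "\<dots> \<le> W n q (perms n)" by (rule IH)
    finally show ?thesis unfolding r_def .
  qed
qed

lemma set_bound:
  assumes "S \<subseteq> {1..n}" "card S = L" "1 \<le> m" "m \<le> L" "0 < q" "q \<le> 1"
  shows "W n q {p\<in>perms n. incr p S} * (real m / exp 1)^L * q^(4*m*n) \<le> W n q (perms n)"
proof -
  have fin: "finite S" using assms(1) finite_subset by blast
  define xs where "xs = sorted_list_of_set S"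
  have "set xs = S" "length xs = L" using fin assms(2) by (simp_all add: xs_def)
  moreover have "W n q {p\<in>perms n. incr p (set xs)} * (real m / exp 1)^length xs * q^(4*m*(n+1-1))
           \<le> W n q (perms n)"
    by (rule chain) (use assms \<open>set xs = S\<close> \<open>length xs = L\<close> in \<open>auto simp: xs_def\<close>)
  ultimately show ?thesis by simp
qed

lemma LIS_witness:
  assumes "LIS n p \<ge> L"
  shows "\<exists>S. S \<subseteq> {1..n} \<and> card S = L \<and> incr p S"
proof -
  define F where "F = {S. S \<subseteq> {1..n} \<and> (\<forall>i\<in>S. \<forall>j\<in>S. i < j \<longrightarrow> p i < p j)}"
  have finF: "finite F" unfolding F_def by (rule finite_subset[of _ "Pow {1..n}"]) auto
  have neF: "F \<noteq> {}" unfolding F_def by auto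
  have "LIS n p = Max (card ` F)" unfolding LIS_def F_def by simp
  moreover have "Max (card ` F) \<in> card ` F" using finF neF by simp
  ultimately obtain S where S: "S \<in> F" "card S \<ge> L" using assms by auto
  have finS: "finite S" using S(1) unfolding F_def using finite_subset by blast
  obtain T where T: "T \<subseteq> S" "card T = L" using obtain_subset_with_card_n[OF S(2)] by blast
  show ?thesis using S T unfolding F_def incr_def by (intro exI[of _ T]) auto
qed

lemma Z_pos: "0 < q \<Longrightarrow> 0 < W n q (perms n)"
  unfolding W_def perms_def
  by (intro sum_pos) (auto intro: finite_permutations permutes_id)

lemma union_bound:
  assumes "1 \<le> m" "m \<le> L" "0 < q" "q \<le> 1"
  shows "mallows_prob n q (\<lambda>p. LIS n p \<ge> L)
     \<le> real (n choose L) * ((real m / exp 1)^L * q^(4*m*n)) powi -1"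
proof -
  define Fam where "Fam = {S. S \<subseteq> {1..n} \<and> card S = L}"
  define E where "E = {p\<in>perms n. L \<le> LIS n p}"
  define c where "c = (real m / exp 1)^L * q^(4*m*n)"
  have c0: "0 < c" unfolding c_def using assms by simp
  have finFam: "finite Fam" unfolding Fam_def by (rule finite_subset[of _ "Pow {1..n}"]) auto
  have cardF: "card Fam = n choose L" unfolding Fam_def using n_subsets[of "{1..n}" L] by simp
  have finP: "finite (perms n)" unfolding perms_def using finite_permutations by blast
  have Z0: "0 < W n q (perms n)" using Z_pos assms by blast
  have "W n q E = (\<Sum>p\<in>E. q ^ inversions n p)" unfolding W_def ..
  also have "\<dots> \<le> (\<Sum>p\<in>E. \<Sum>S\<in>Fam. of_bool (incr p S) * q ^ inversions n p)"
  proof (intro sum_mono)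
    fix p assume "p \<in> E"
    then obtain S where S: "S \<in> Fam" "incr p S" using LIS_witness unfolding E_def Fam_def by blast
    have "of_bool (incr p S) * q ^ inversions n p \<le> (\<Sum>S\<in>Fam. of_bool (incr p S) * q ^ inversions n p)"
      by (rule member_le_sum) (use S finFam assms in auto)
    then show "q ^ inversions n p \<le> (\<Sum>S\<in>Fam. of_bool (incr p S) * q ^ inversions n p)" using S by simp
  qed
  also have "\<dots> = (\<Sum>S\<in>Fam. \<Sum>p\<in>E. of_bool (incr p S) * q ^ inversions n p)" by (rule sum.swap)
  also have "\<dots> \<le> (\<Sum>S\<in>Fam. W n q (perms n) / c)"
  proof (intro sum_mono)
    fix S assume S: "S \<in> Fam"
    have "(\<Sum>p\<in>E. of_bool (incr p S) * q ^ inversions n p) = (\<Sum>p\<in>{p\<in>E. incr p S}. q ^ inversions n p)"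
      by (simp add: sum.inter_filter[symmetric] of_bool_def if_distrib cong: if_cong) (rule sum.mono_neutral_cong_right; use finP E_def in \<open>auto\<close>)?
    also have "\<dots> \<le> W n q {p\<in>perms n. incr p S}"
      unfolding W_def using assms finP by (intro sum_mono2) (auto simp: E_def intro: finite_subset)
    also have "\<dots> \<le> W n q (perms n) / c"
      using set_bound[of S n L m q] S assms c0 unfolding Fam_def c_def by (simp add: field_simps)
    finally show "(\<Sum>p\<in>E. of_bool (incr p S) * q ^ inversions n p) \<le> W n q (perms n) / c" .
  qed
  also have "\<dots> = real (n choose L) * (W n q (perms n) / c)" using cardF by simp
  finally have "W n q E \<le> real (n choose L) * (W n q (perms n) / c)" .
  then have "W n q E / W n q (perms n) \<le> real (n choose L) / c"
    using Z0 by (simp add: field_simps)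
  moreover have "mallows_prob n q (\<lambda>p. LIS n p \<ge> L) = W n q E / W n q (perms n)"
    unfolding mallows_prob_def mallows_Z_def W_def E_def by simp
  ultimately show ?thesis unfolding c_def by (simp add: power_int_minus divide_inverse)
qed

lemma q_exp_bound:
  fixes x :: real
  assumes "0 \<le> x" "x \<le> 1/2"
  shows "exp (-2*x) \<le> 1 - x"
proof -
  have "- x - 2 * x\<^sup>2 \<le> ln (1 - x)" by (rule ln_one_minus_pos_lower_bound) (use assms in auto)
  moreover have "-2*x \<le> - x - 2 * x\<^sup>2"
  proof -
    have "x*(2*x) \<le> x*1" using assms by (intro mult_left_mono) auto
    then show ?thesis by (simp add: power2_eq_square)
  qed
  ultimately have "-2*x \<le> ln (1-x)" by linarith
  then have "exp (-2*x) \<le> exp (ln (1-x))" by simp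
  also have "\<dots> = 1 - x" using assms by simp
  finally show ?thesis .
qed

theorem proposition4p2:
  "\<exists>C::real. C > 0 \<and>
     (\<forall>n::nat. \<forall>q::real. \<forall>L::nat.
        n \<ge> 1 \<longrightarrow> 0 < q \<longrightarrow> q \<le> 1 - 2 / real n \<longrightarrow>
        real L \<ge> C * real n * sqrt (1 - q) \<longrightarrow>
        mallows_prob n q (\<lambda>p. LIS n p \<ge> L)
          \<le> (C * (1 - q) * (real n)^2 / (real L)^2) ^ L)"
proof (intro exI[of _ 120000] conjI allI impI)
  show "(0::real) < 120000" by simp
  fix n :: nat and q :: real and L :: nat
  assume n1: "n \<ge> 1" and q0: "0 < q" and qn: "q \<le> 1 - 2 / real n"
    and LC: "real L \<ge> 120000 * real n * sqrt (1 - q)"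
  define C :: real where "C = 120000"
  define x where "x = 1 - q"
  have xn: "x * real n \<ge> 2" using qn n1 unfolding x_def by (simp add: field_simps)
  have x0: "x > 0"
  proof (rule ccontr)
    assume "\<not> x > 0"
    then have "x * real n \<le> 0" by (intro mult_nonpos_nonneg) auto
    then show False using xn by linarith
  qed
  have q1: "q \<le> 1" using x0 x_def by simp
  have sx: "sqrt x > 0" using x0 by simp
  have "120000 * real n * sqrt (1 - q) > 0" using sx n1 unfolding x_def by simp
  then have L0: "real L > 0" using LC by linarith
  then have L1: "L \<ge> 1" by simp
  have base0: "0 \<le> C * x * (real n)^2 / (real L)^2" unfolding C_def using x0 by simp
  show "mallows_prob n q (\<lambda>p. LIS n p \<ge> L) \<le> (120000 * (1 - q) * (real n)^2 / (real L)^2) ^ L"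
  proof (cases "L \<le> n")
    case False
    have "mallows_prob n q (\<lambda>p. LIS n p \<ge> L) \<le> real (n choose L) * ((real 1 / exp 1)^L * q^(4*1*n)) powi -1"
      by (rule union_bound) (use L1 q0 q1 in auto)
    also have "\<dots> = 0" using False by simp
    finally have "mallows_prob n q (\<lambda>p. LIS n p \<ge> L) \<le> 0" .
    moreover have "0 \<le> (C * x * (real n)^2 / (real L)^2) ^ L" using base0 by simp
    ultimately show ?thesis unfolding C_def x_def by linarith
  next
    case True
    have Csx: "C * sqrt x \<le> 1"
    proof -
      have "C * real n * sqrt x \<le> real n" using LC True unfolding C_def x_def by linarith
      then show ?thesis using n1 by (simp add: mult.commute mult.left_commute)
    qed
    have xsmall: "x \<le> 1/2"
    proof -
      have "sqrt x \<le> 1 / C" using Csx unfolding C_def by (simp add: field_simps)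
      then have "sqrt x ^ 2 \<le> (1/C)^2" using sx by (intro power_mono) auto
      then show ?thesis using x0 unfolding C_def by (simp add: power_divide)
    qed
    have xle1: "x \<le> sqrt x"
    proof -
      have "sqrt x \<le> 1" using Csx sx unfolding C_def by linarith
      then have "sqrt x * sqrt x \<le> sqrt x * 1" using sx by (intro mult_left_mono) auto
      then show ?thesis using x0 by simp
    qed
    define y where "y = real L / (x * real n)"
    have y1: "y \<ge> 1"
    proof -
      have "x \<le> C * sqrt x" using xle1 sx unfolding C_def by linarith
      then have "x * real n \<le> (C * sqrt x) * real n" by (intro mult_right_mono) auto
      then have "x * real n \<le> C * real n * sqrt x" by (simp add: mult_ac)
      then have "x * real n \<le> real L" using LC unfolding C_def x_def by linarith
      then show ?thesis unfolding y_def using xn by simp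
    qed
    define m where "m = nat \<lfloor>y\<rfloor>"
    have my: "real m \<le> y" unfolding m_def using y1 by linarith
    have my2: "y \<le> 2 * real m"
    proof -
      have f1: "\<lfloor>y\<rfloor> \<ge> 1" using y1 by linarith
      have f2: "real_of_int \<lfloor>y\<rfloor> > y - 1" by linarith
      have "real m = real_of_int \<lfloor>y\<rfloor>" unfolding m_def using f1 by simp
      then show ?thesis using f1 f2 by linarith
    qed
    have m1: "1 \<le> m" unfolding m_def using y1 by linarith
    have yL: "y \<le> real L"
    proof -
      have "real L * 1 \<le> real L * (x * real n)" using xn L0 by (intro mult_left_mono) auto
      then show ?thesis unfolding y_def using xn by (simp add: field_simps)
    qed
    have mL: "m \<le> L" using my yL by linarith
    have mxn: "real m * x * real n \<le> real L" using my xn unfolding y_def by (simp add: field_simps)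
    have L2m: "real L \<le> 2 * real m * x * real n" using my2 xn unfolding y_def by (simp add: field_simps)
    define a where "a = (real m / exp 1)^L"
    define b where "b = q^(4*m*n)"
    have a0: "a > 0" unfolding a_def using m1 by simp
    have b0: "b > 0" unfolding b_def using q0 by simp
    have UB: "mallows_prob n q (\<lambda>p. LIS n p \<ge> L) \<le> real (n choose L) * (a * b) powi -1"
      unfolding a_def b_def by (rule union_bound) (use m1 mL q0 q1 in auto)
    have B1: "real (n choose L) \<le> (exp 1 * real n / real L)^L"
    proof -
      have "real (n choose L) * fact L \<le> real n ^ L"
        using binomial_fact_pow[of n L] by (metis of_nat_fact of_nat_le_iff of_nat_mult of_nat_power)
      moreover have "(real L / exp 1)^L \<le> fact L" by (rule fact_ge)
      ultimately have "real (n choose L) * (real L / exp 1)^L \<le> real n ^ L"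
        by (metis (no_types, lifting) mult_left_mono of_nat_0_le_iff order_trans)
      moreover have "(real L / exp 1)^L > 0" using L0 by simp
      ultimately have "real (n choose L) \<le> real n ^ L / (real L / exp 1)^L" by (simp add: field_simps)
      also have "\<dots> = (exp 1 * real n / real L)^L" by (simp add: power_divide field_simps)
      finally show ?thesis .
    qed
    have B2: "1 / a \<le> (2 * exp 1 * x * real n / real L)^L"
    proof -
      have "exp 1 / real m \<le> 2 * exp 1 * x * real n / real L"
        using L2m m1 L0 by (simp add: field_simps)
      then have "(exp 1 / real m)^L \<le> (2 * exp 1 * x * real n / real L)^L"
        by (intro power_mono) auto
      then show ?thesis unfolding a_def by (simp add: power_divide)
    qed
    have B3: "1 / b \<le> exp 8 ^ L"
    proof -
      have "exp (-2*x) \<le> q" using q_exp_bound[of x] x0 xsmall unfolding x_def by simp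
      then have "exp (-2*x) ^ (4*m*n) \<le> b" unfolding b_def by (intro power_mono) auto
      moreover have "exp (-2*x) ^ (4*m*n) = exp (- (8 * (real m * x * real n)))"
        by (simp add: exp_of_nat_mult[symmetric] algebra_simps)
      moreover have "exp (- (8 * real L)) \<le> exp (- (8 * (real m * x * real n)))" using mxn by simp
      ultimately have "exp (- (8 * real L)) \<le> b" by linarith
      then have "1 / b \<le> 1 / exp (- (8 * real L))" using b0 by (intro divide_left_mono) auto
      also have "\<dots> = exp 8 ^ L" by (simp add: exp_minus exp_of_nat_mult[symmetric] field_simps)
      finally show ?thesis .
    qed
    have "real (n choose L) * (a * b) powi -1 = real (n choose L) * (1/a) * (1/b)"
      by (simp add: power_int_minus divide_inverse mult_ac)
    also have "\<dots> \<le> (exp 1 * real n / real L)^L * (2 * exp 1 * x * real n / real L)^L * exp 8 ^ L"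
      using B1 B2 B3 a0 b0 x0 by (intro mult_mono) auto
    also have "\<dots> = ((exp 1 * real n / real L) * (2 * exp 1 * x * real n / real L) * exp 8)^L"
      by (simp only: power_mult_distrib)
    also have "(exp 1 * real n / real L) * (2 * exp 1 * x * real n / real L) * exp 8
        = 2 * (exp 1 * exp 1 * exp 8) * x * (real n)^2 / (real L)^2"
      using L0 by (simp add: power2_eq_square)
    also have "(2 * (exp 1 * exp 1 * exp 8) * x * (real n)^2 / (real L)^2)^L
        \<le> (C * x * (real n)^2 / (real L)^2)^L"
    proof (intro power_mono divide_right_mono mult_right_mono)
      have "exp 1 * exp 1 * exp (8::real) = exp 1 ^ 10"
        by (simp add: exp_add[symmetric] exp_of_nat_mult[symmetric])
      also have "\<dots> \<le> 3 ^ 10" by (intro power_mono exp_le) auto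
      finally show "2 * (exp 1 * exp 1 * exp 8) \<le> C" unfolding C_def by simp
    qed (use x0 in auto)
    finally show ?thesis using UB unfolding C_def x_def by linarith
  qed
qed

end
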